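(* Let $P=\Bbbk[x_1,x_2,x_3]$ with Poisson bracket $\{x_1,x_2\}=0$, $\{x_2,x_3\}=3x_1^2$, $\{x_3,x_1\}=0$. Then $\mathrm{PAut}_{\mathrm{gr}}(P)$ consists exactly of the maps whose matrix is \[ \begin{bmatrix}\epsilon & 0 & 0\\ a & b & c\\ d & e & f\end{bmatrix},\quad a,b,c,d,e,f\in\Bbbk,\ bf\neq ce,\ \epsilon^2=bf-ce, \] and the set of Poisson reflections of $P$ is \[ \mathrm{PR}(P)=\left\{\begin{bmatrix}-1&0&0\\ a&1&0\\ d&0&1\end{bmatrix}: a,d\in\Bbbk\right\}. \]
   Context: $\Bbbk$ is algebraically closed of characteristic $0$; $P$ has the standard grading. A graded Poisson automorphism $\phi$ (degree-preserving bijective algebra and Lie homomorphism) is identified with the matrix $[a_{ij}]$ where $\phi(x_i)=\sum_{k=1}^3 a_{ik}x_k$. A Poisson reflection is a finite-order graded Poisson automorphism $\phi$ such that $\phi|_{P_1}$ has eigenvalues $1,1,\xi$ for some primitive $m$-th root of unity $\xi\neq1$. *)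

theory Defs
  imports "HOL-Library.Poly_Mapping" "Jordan_Normal_Form.Char_Poly"
begin

text \<open>Polynomials in variables indexed by nat (x_1,x_2,x_3 are indices 0,1,2);
  a monomial is an exponent vector nat =>0 nat.\<close>

type_synonym 'k mpoly = "(nat \<Rightarrow>\<^sub>0 nat) \<Rightarrow>\<^sub>0 'k"

definition Xv :: "nat \<Rightarrow> 'k::comm_ring_1 mpoly" where
  "Xv i = Poly_Mapping.single (Poly_Mapping.single i 1) 1"

definition Cst :: "'k::comm_ring_1 \<Rightarrow> 'k mpoly" where
  "Cst c = Poly_Mapping.single 0 c"

definition Pset :: "'k::comm_ring_1 mpoly set" where
  "Pset = {f. \<forall>m\<in>Poly_Mapping.keys f. \<forall>i\<in>Poly_Mapping.keys m. i < 3}"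

definition mdeg :: "(nat \<Rightarrow>\<^sub>0 nat) \<Rightarrow> nat" where
  "mdeg m = (\<Sum>i\<in>Poly_Mapping.keys m. Poly_Mapping.lookup m i)"

definition Pdeg :: "nat \<Rightarrow> 'k::comm_ring_1 mpoly set" where
  "Pdeg n = {f\<in>Pset. \<forall>m\<in>Poly_Mapping.keys f. mdeg m = n}"

definition pd :: "nat \<Rightarrow> 'k::comm_ring_1 mpoly \<Rightarrow> 'k mpoly" where
  "pd i f = (\<Sum>m\<in>Poly_Mapping.keys f.
      Poly_Mapping.single (m - Poly_Mapping.single i 1)
        (of_nat (Poly_Mapping.lookup m i) * Poly_Mapping.lookup f m))"

definition Bgen :: "nat \<Rightarrow> nat \<Rightarrow> 'k::comm_ring_1 mpoly" where
  "Bgen i j = (if i = 1 \<and> j = 2 then Cst 3 * Xv 0 * Xv 0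
               else if i = 2 \<and> j = 1 then - (Cst 3 * Xv 0 * Xv 0) else 0)"

text \<open>The Poisson bracket: the unique biderivation extending Bgen.\<close>
definition pbr :: "'k::comm_ring_1 mpoly \<Rightarrow> 'k mpoly \<Rightarrow> 'k mpoly" where
  "pbr f g = (\<Sum>i<3. \<Sum>j<3. pd i f * pd j g * Bgen i j)"

definition graded_poisson_aut :: "('k::comm_ring_1 mpoly \<Rightarrow> 'k mpoly) \<Rightarrow> bool" where
  "graded_poisson_aut \<phi> \<longleftrightarrow>
     bij_betw \<phi> Pset Pset \<and>
     (\<forall>f\<in>Pset. \<forall>g\<in>Pset. \<phi> (f + g) = \<phi> f + \<phi> g \<and> \<phi> (f * g) = \<phi> f * \<phi> g
                       \<and> \<phi> (pbr f g) = pbr (\<phi> f) (\<phi> g)) \<and>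
     (\<forall>c. \<forall>f\<in>Pset. \<phi> (Cst c * f) = Cst c * \<phi> f) \<and>
     \<phi> 1 = 1 \<and>
     (\<forall>n. \<phi> ` Pdeg n \<subseteq> Pdeg n)"

definition has_matrix :: "('k::comm_ring_1 mpoly \<Rightarrow> 'k mpoly) \<Rightarrow> 'k mat \<Rightarrow> bool" where
  "has_matrix \<phi> A \<longleftrightarrow> A \<in> carrier_mat 3 3 \<and>
     (\<forall>i<3. \<phi> (Xv i) = (\<Sum>k<3. Cst (A $$ (i, k)) * Xv k))"

definition primitive_root :: "nat \<Rightarrow> 'k::field \<Rightarrow> bool" where
  "primitive_root m \<xi> \<longleftrightarrow> 0 < m \<and> \<xi> ^ m = 1 \<and> (\<forall>k. 0 < k \<and> k < m \<longrightarrow> \<xi> ^ k \<noteq> 1)"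

text \<open>Poisson reflection: finite-order graded Poisson automorphism whose
  restriction to P_1 has eigenvalues 1,1,xi (with multiplicity), xi a primitive
  m-th root of unity, xi ~= 1. The restriction to P_1 has matrix A^T in basis
  x_1,x_2,x_3, whose characteristic polynomial equals that of A.\<close>
definition poisson_reflection :: "('k::field mpoly \<Rightarrow> 'k mpoly) \<Rightarrow> bool" where
  "poisson_reflection \<phi> \<longleftrightarrow> graded_poisson_aut \<phi> \<and>
     (\<exists>n>0. \<forall>f\<in>Pset. (\<phi> ^^ n) f = f) \<and>
     (\<exists>A m \<xi>. has_matrix \<phi> A \<and> primitive_root m \<xi> \<and> \<xi> \<noteq> 1 \<and>
        char_poly A = [:-1, 1:] ^ 2 * [:-\<xi>, 1:])"

end

theory Submission
  imports Defs
begin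

lemma det2: assumes A: "(A :: 'a :: comm_ring_1 mat) \<in> carrier_mat 2 2"
  shows "det A = A $$ (0,0) * A $$ (1,1) - A $$ (0,1) * A $$ (1,0)"
proof -
  have "det A = (\<Sum>i<2. A $$ (i,0) * cofactor A i 0)"
    by (rule laplace_expansion_column[OF A], simp)
  also have "\<dots> = A $$ (0,0) * cofactor A 0 0 + A $$ (1,0) * cofactor A 1 0"
    by (simp add: numeral_2_eq_2)
  also have "cofactor A 0 0 = A $$ (1,1)"
    unfolding cofactor_def using A
    by (subst det_single, auto simp: mat_delete_def)
  also have "cofactor A 1 0 = - A $$ (0,1)"
    unfolding cofactor_def using A
    by (subst det_single, auto simp: mat_delete_def)
  finally show ?thesis by (simp add: algebra_simps)
qed

lemma det3: assumes A: "(A :: 'a :: comm_ring_1 mat) \<in> carrier_mat 3 3"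
  shows "det A = A $$ (0,0) * (A $$ (1,1) * A $$ (2,2) - A $$ (1,2) * A $$ (2,1))
     - A $$ (1,0) * (A $$ (0,1) * A $$ (2,2) - A $$ (0,2) * A $$ (2,1))
     + A $$ (2,0) * (A $$ (0,1) * A $$ (1,2) - A $$ (0,2) * A $$ (1,1))"
proof -
  have "det A = (\<Sum>i<3. A $$ (i,0) * cofactor A i 0)"
    by (rule laplace_expansion_column[OF A], simp)
  also have "\<dots> = A $$ (0,0) * cofactor A 0 0 + A $$ (1,0) * cofactor A 1 0 + A $$ (2,0) * cofactor A 2 0"
    by (simp add: lessThan_nat_numeral)
  also have "cofactor A 0 0 = A $$ (1,1) * A $$ (2,2) - A $$ (1,2) * A $$ (2,1)"
    unfolding cofactor_def using A
    by (subst det2, auto simp: mat_delete_def numeral_2_eq_2)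
  also have "cofactor A 1 0 = - (A $$ (0,1) * A $$ (2,2) - A $$ (0,2) * A $$ (2,1))"
    unfolding cofactor_def using A
    by (subst det2, auto simp: mat_delete_def numeral_2_eq_2)
  also have "cofactor A 2 0 = A $$ (0,1) * A $$ (1,2) - A $$ (0,2) * A $$ (1,1)"
    unfolding cofactor_def using A
    by (subst det2, auto simp: mat_delete_def numeral_2_eq_2)
  finally show ?thesis by (simp add: algebra_simps)
qed

lemma cpm_idx: assumes A: "A \<in> carrier_mat n n" and "i < n" "j < n"
  shows "char_poly_matrix A $$ (i,j) = (if i = j then [:- A $$ (i,j), 1:] else [:- A $$ (i,j):])"
  using assms unfolding char_poly_matrix_def by (simp add: index_add_mat index_smult_mat index_one_mat index_map_mat)

lemma mrl3_idx:
  "mat_of_rows_list 3 [[x00, x01, x02], [x10, x11, x12], [x20, x21, x22]] $$ (0,0) = x00"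
  "mat_of_rows_list 3 [[x00, x01, x02], [x10, x11, x12], [x20, x21, x22]] $$ (0,1) = x01"
  "mat_of_rows_list 3 [[x00, x01, x02], [x10, x11, x12], [x20, x21, x22]] $$ (0,2) = x02"
  "mat_of_rows_list 3 [[x00, x01, x02], [x10, x11, x12], [x20, x21, x22]] $$ (1,0) = x10"
  "mat_of_rows_list 3 [[x00, x01, x02], [x10, x11, x12], [x20, x21, x22]] $$ (1,1) = x11"
  "mat_of_rows_list 3 [[x00, x01, x02], [x10, x11, x12], [x20, x21, x22]] $$ (1,2) = x12"
  "mat_of_rows_list 3 [[x00, x01, x02], [x10, x11, x12], [x20, x21, x22]] $$ (2,0) = x20"
  "mat_of_rows_list 3 [[x00, x01, x02], [x10, x11, x12], [x20, x21, x22]] $$ (2,1) = x21"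
  "mat_of_rows_list 3 [[x00, x01, x02], [x10, x11, x12], [x20, x21, x22]] $$ (2,2) = x22"
  by (simp_all add: mat_of_rows_list_def)

lemma mrl3_carrier: "mat_of_rows_list 3 [[x00, x01, x02], [x10, x11, x12], [x20, x21, x22]] \<in> carrier_mat 3 3"
proof -
  have "length [[x00, x01, x02], [x10, x11, x12], [x20, x21, x22]] = 3" by simp
  then show ?thesis unfolding mat_of_rows_list_def by (metis mat_carrier)
qed

lemma cp3: "char_poly (mat_of_rows_list 3 [[\<epsilon>, 0, 0], [a, b, c], [d, e, f]] :: 'k::comm_ring_1 mat)
   = [:-\<epsilon>, 1:] * [:b*f - c*e, -(b+f), 1:]"
proof -
  let ?A = "mat_of_rows_list 3 [[\<epsilon>, 0, 0], [a, b, c], [d, e, f]] :: 'k mat"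
  let ?C = "char_poly_matrix ?A"
  have A: "?A \<in> carrier_mat 3 3" by (rule mrl3_carrier)
  have e00: "?C $$ (0,0) = [:-\<epsilon>,1:]" by (subst cpm_idx[OF A], simp_all add: mrl3_idx mrl3_idx[unfolded One_nat_def])
  have e01: "?C $$ (0,1) = 0" by (subst cpm_idx[OF A], simp_all add: mrl3_idx mrl3_idx[unfolded One_nat_def])
  have e02: "?C $$ (0,2) = 0" by (subst cpm_idx[OF A], simp_all add: mrl3_idx mrl3_idx[unfolded One_nat_def])
  have e10: "?C $$ (1,0) = [:-a:]" by (subst cpm_idx[OF A], simp_all add: mrl3_idx mrl3_idx[unfolded One_nat_def])
  have e11: "?C $$ (1,1) = [:-b,1:]" by (subst cpm_idx[OF A], simp_all add: mrl3_idx mrl3_idx[unfolded One_nat_def])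
  have e12: "?C $$ (1,2) = [:-c:]" by (subst cpm_idx[OF A], simp_all add: mrl3_idx mrl3_idx[unfolded One_nat_def])
  have e20: "?C $$ (2,0) = [:-d:]" by (subst cpm_idx[OF A], simp_all add: mrl3_idx mrl3_idx[unfolded One_nat_def])
  have e21: "?C $$ (2,1) = [:-e:]" by (subst cpm_idx[OF A], simp_all add: mrl3_idx mrl3_idx[unfolded One_nat_def])
  have e22: "?C $$ (2,2) = [:-f,1:]" by (subst cpm_idx[OF A], simp_all add: mrl3_idx mrl3_idx[unfolded One_nat_def])
  have "char_poly ?A = [:- \<epsilon>, 1:] * ([:- b, 1:] * [:- f, 1:] - [:- c:] * [:- e:])"
    unfolding char_poly_def
    by (subst det3[OF char_poly_matrix_closed[OF A]], simp only: e00 e01 e02 e10 e11 e12 e20 e21 e22 mult_zero_left mult_zero_right diff_self diff_zero add_0_right)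
  moreover have X: "([:- b, 1:] * [:- f, 1:] - [:- c:] * [:- e:]) = [:b*f - c*e, -(b+f), 1:]"
    by simp
  ultimately show ?thesis by (simp only: X)
qed

lemma Cst_0[simp]: "Cst 0 = 0" by (simp add: Cst_def)
lemma Cst_1[simp]: "Cst 1 = 1" by (simp add: Cst_def)
lemma Cst_add: "Cst (a + b) = Cst a + Cst b" by (simp add: Cst_def single_add)
lemma Cst_mult: "Cst (a * b) = Cst a * Cst b" by (simp add: Cst_def mult_single)
lemma Cst_uminus: "Cst (- a) = - Cst a" by (simp add: Cst_def single_uminus)
lemma Cst_diff: "Cst (a - b) = Cst a - Cst b" by (simp add: Cst_def single_diff)
lemma Cst_numeral: "Cst (numeral n) = numeral n" by (simp add: Cst_def)

lemma Xv_pow: "Xv i ^ k = Poly_Mapping.single (Poly_Mapping.single i k) 1"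
  by (induction k) (simp_all add: Xv_def mult_single single_add[symmetric] add.commute)

lemma Cst_mult_single: "Cst c * Poly_Mapping.single m d = Poly_Mapping.single m (c * d)"
  by (simp add: Cst_def mult_single)

lemma lookup_Cst_mult: "Poly_Mapping.lookup (Cst c * f) m = c * Poly_Mapping.lookup f m"
  by (simp add: Cst_def flip: mult_map_scale_conv_mult) (simp add: Poly_Mapping.map.rep_eq when_def)

lemma poly_expand: "f = (\<Sum>m\<in>Poly_Mapping.keys f. Poly_Mapping.single m (Poly_Mapping.lookup f m))"
proof (rule poly_mapping_eqI)
  fix k
  have "Poly_Mapping.lookup (\<Sum>m\<in>Poly_Mapping.keys f. Poly_Mapping.single m (Poly_Mapping.lookup f m)) k
     = (\<Sum>m\<in>Poly_Mapping.keys f. if m = k then Poly_Mapping.lookup f m else 0)"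
    by (simp add: lookup_sum lookup_single when_def)
  also have "\<dots> = Poly_Mapping.lookup f k"
    by (simp add: sum.delta in_keys_iff)
  finally show "Poly_Mapping.lookup f k = Poly_Mapping.lookup (\<Sum>m\<in>Poly_Mapping.keys f. Poly_Mapping.single m (Poly_Mapping.lookup f m)) k" by simp
qed

lemma additive_0:
  fixes F :: "'a::monoid_add \<Rightarrow> 'b::ab_group_add"
  assumes "\<And>x y. F (x + y) = F x + F y"
  shows "F 0 = 0"
  using assms[of 0 0] by simp

lemma additive_sum:
  fixes F :: "'a::comm_monoid_add \<Rightarrow> 'b::ab_group_add"
  assumes "\<And>x y. F (x + y) = F x + F y"
  shows "F (sum g S) = (\<Sum>s\<in>S. F (g s))"
proof (induction S rule: infinite_finite_induct)
  case (infinite A) then show ?case using additive_0[OF assms] by simp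
next
  case empty then show ?case using additive_0[OF assms] by simp
next
  case (insert x F') then show ?case by (simp add: assms)
qed

lemma additive_eq:
  fixes F G :: "('a \<Rightarrow>\<^sub>0 'c::comm_monoid_add) \<Rightarrow> 'b::ab_group_add"
  assumes "\<And>x y. F (x + y) = F x + F y" "\<And>x y. G (x + y) = G x + G y"
    and "\<And>m c. F (Poly_Mapping.single m c) = G (Poly_Mapping.single m c)"
  shows "F f = G f"
proof -
  have "F f = F (\<Sum>m\<in>Poly_Mapping.keys f. Poly_Mapping.single m (Poly_Mapping.lookup f m))"
    by (subst poly_expand, rule refl)
  also have "\<dots> = G (\<Sum>m\<in>Poly_Mapping.keys f. Poly_Mapping.single m (Poly_Mapping.lookup f m))"
    by (simp add: additive_sum[OF assms(1)] additive_sum[OF assms(2)] assms(3))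
  also have "\<dots> = G f" by (subst (2) poly_expand, rule refl)
  finally show ?thesis .
qed

lemma biadditive_eq:
  fixes F G :: "('a \<Rightarrow>\<^sub>0 'c::comm_monoid_add) \<Rightarrow> ('a \<Rightarrow>\<^sub>0 'c) \<Rightarrow> 'b::ab_group_add"
  assumes "\<And>x y z. F (x + y) z = F x z + F y z" "\<And>x y z. F z (x + y) = F z x + F z y"
    and "\<And>x y z. G (x + y) z = G x z + G y z" "\<And>x y z. G z (x + y) = G z x + G z y"
    and "\<And>m c n d. F (Poly_Mapping.single m c) (Poly_Mapping.single n d) = G (Poly_Mapping.single m c) (Poly_Mapping.single n d)"
  shows "F f g = G f g"
proof -
  have s: "F (Poly_Mapping.single m c) g = G (Poly_Mapping.single m c) g" for m c
    by (rule additive_eq[where F = "F (Poly_Mapping.single m c)"], rule assms(2), rule assms(4), rule assms(5))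
  show ?thesis
    by (rule additive_eq[where F = "\<lambda>x. F x g"], rule assms(1), rule assms(3), rule s)
qed


lemma additive_uminus:
  fixes F :: "'a::ab_group_add \<Rightarrow> 'b::ab_group_add"
  assumes "\<And>x y. F (x + y) = F x + F y"
  shows "F (- x) = - F x"
proof -
  have "F x + F (- x) = 0" using assms[of x "-x"] additive_0[OF assms] by simp
  then show ?thesis by (simp add: add_eq_0_iff)
qed

lemma additive_diff:
  fixes F :: "'a::ab_group_add \<Rightarrow> 'b::ab_group_add"
  assumes "\<And>x y. F (x + y) = F x + F y"
  shows "F (x - y) = F x - F y"
  using assms[of x "-y"] additive_uminus[OF assms, of y] by simp

section \<open>Partial derivatives\<close>

lemma pd_single: "pd i (Poly_Mapping.single m c) =
   Poly_Mapping.single (m - Poly_Mapping.single i 1) (of_nat (Poly_Mapping.lookup m i) * c)"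
  by (cases "c = 0") (simp_all add: pd_def)

lemma pd_add: "pd i (f + g) = pd i f + pd i g"
  unfolding pd_def
  by (rule setsum_keys_plus_distrib[where f = "\<lambda>m v. Poly_Mapping.single (m - Poly_Mapping.single i 1) (of_nat (Poly_Mapping.lookup m i) * v)"])
     (simp_all add: distrib_left single_add)

lemma pd_0[simp]: "pd i 0 = 0" by (rule additive_0, rule pd_add)
lemma pd_uminus: "pd i (- f) = - pd i f" by (rule additive_uminus, rule pd_add)
lemma pd_diff: "pd i (f - g) = pd i f - pd i g" by (rule additive_diff, rule pd_add)
lemma pd_sum: "pd i (sum g S) = (\<Sum>s\<in>S. pd i (g s))" by (rule additive_sum, rule pd_add)

lemma mon_shift:
  fixes m n :: "nat \<Rightarrow>\<^sub>0 nat"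
  assumes "Poly_Mapping.lookup m i > 0"
  shows "m - Poly_Mapping.single i 1 + n = m + n - Poly_Mapping.single i 1"
  using assms by (intro poly_mapping_eqI) (auto simp: lookup_add lookup_minus lookup_single when_def)

lemma pd_mult_single:
  "pd i (Poly_Mapping.single m a * Poly_Mapping.single n b) =
   pd i (Poly_Mapping.single m a) * Poly_Mapping.single n b + Poly_Mapping.single m a * pd i (Poly_Mapping.single n b)"
proof -
  let ?e = "Poly_Mapping.single i (1::nat)"
  have h1: "Poly_Mapping.single (m - ?e + n) (of_nat (Poly_Mapping.lookup m i) * a * b) =
            Poly_Mapping.single (m + n - ?e) (of_nat (Poly_Mapping.lookup m i) * a * b)"
  proof (cases "Poly_Mapping.lookup m i = 0")
    case False
    then have "m - ?e + n = m + n - ?e" by (intro mon_shift) simp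
    then show ?thesis by simp
  qed simp
  have h2: "Poly_Mapping.single (m + (n - ?e)) (of_nat (Poly_Mapping.lookup n i) * a * b) =
            Poly_Mapping.single (m + n - ?e) (of_nat (Poly_Mapping.lookup n i) * a * b)"
  proof (cases "Poly_Mapping.lookup n i = 0")
    case False
    then have "n - ?e + m = n + m - ?e" by (intro mon_shift) simp
    then show ?thesis by (simp add: add.commute)
  qed simp
  have "pd i (Poly_Mapping.single m a * Poly_Mapping.single n b) =
    Poly_Mapping.single (m + n - ?e) (of_nat (Poly_Mapping.lookup m i) * a * b + of_nat (Poly_Mapping.lookup n i) * a * b)"
    by (simp add: pd_single mult_single lookup_add algebra_simps)
  also have "\<dots> = Poly_Mapping.single (m + n - ?e) (of_nat (Poly_Mapping.lookup m i) * a * b)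
      + Poly_Mapping.single (m + n - ?e) (of_nat (Poly_Mapping.lookup n i) * a * b)"
    by (rule single_add)
  also have "\<dots> = Poly_Mapping.single (m - ?e + n) (of_nat (Poly_Mapping.lookup m i) * a * b)
      + Poly_Mapping.single (m + (n - ?e)) (of_nat (Poly_Mapping.lookup n i) * a * b)"
    by (simp only: h1 h2)
  also have "\<dots> = pd i (Poly_Mapping.single m a) * Poly_Mapping.single n b + Poly_Mapping.single m a * pd i (Poly_Mapping.single n b)"
    by (simp only: pd_single mult_single mult_ac add_ac)
  finally show ?thesis .
qed

lemma pd_mult: "pd i (f * g) = pd i f * g + f * pd i g"
  by (rule biadditive_eq[where F = "\<lambda>f g. pd i (f * g)" and G = "\<lambda>f g. pd i f * g + f * pd i g"])
     (simp_all add: pd_add distrib_left distrib_right pd_mult_single)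

lemma pd_Cst[simp]: "pd i (Cst c) = 0"
  by (simp add: Cst_def pd_single)

lemma pd_Xv: "pd i (Xv k) = (if i = k then 1 else 0)"
  by (simp add: Xv_def pd_single lookup_single when_def)

lemma pd_Cst_mult: "pd i (Cst c * f) = Cst c * pd i f"
  by (simp add: pd_mult)

lemma Pset_iff: "f \<in> Pset \<longleftrightarrow> (\<forall>m\<in>Poly_Mapping.keys f. Poly_Mapping.keys m \<subseteq> {..<3})"
  by (simp add: Pset_def subset_eq)

lemma Pset_0[simp]: "0 \<in> Pset" by (simp add: Pset_def)

lemma Pset_add: "f \<in> Pset \<Longrightarrow> g \<in> Pset \<Longrightarrow> f + g \<in> Pset"
proof -
  assume f: "f \<in> Pset" and g: "g \<in> Pset"
  show ?thesis unfolding Pset_iff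
  proof
    fix m assume "m \<in> Poly_Mapping.keys (f + g)"
    then have "m \<in> Poly_Mapping.keys f \<or> m \<in> Poly_Mapping.keys g" using keys_add[of f g] by auto
    then show "Poly_Mapping.keys m \<subseteq> {..<3}" using f g unfolding Pset_iff by auto
  qed
qed

lemma Pset_uminus: "f \<in> Pset \<Longrightarrow> - f \<in> Pset"
  by (simp only: Pset_iff keys_minus)

lemma Pset_diff: "f \<in> Pset \<Longrightarrow> g \<in> Pset \<Longrightarrow> f - g \<in> Pset"
  by (simp only: diff_conv_add_uminus) (intro Pset_add Pset_uminus)

lemma Pset_mult: "f \<in> Pset \<Longrightarrow> g \<in> Pset \<Longrightarrow> f * g \<in> Pset"
proof -
  assume f: "f \<in> Pset" and g: "g \<in> Pset"
  show ?thesis unfolding Pset_iff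
  proof
    fix m assume "m \<in> Poly_Mapping.keys (f * g)"
    then obtain a b where "m = a + b" "a \<in> Poly_Mapping.keys f" "b \<in> Poly_Mapping.keys g"
      using keys_mult by blast
    moreover have "Poly_Mapping.keys a \<subseteq> {..<3}" "Poly_Mapping.keys b \<subseteq> {..<3}"
      using f g \<open>a \<in> _\<close> \<open>b \<in> _\<close> unfolding Pset_iff by auto
    ultimately show "Poly_Mapping.keys m \<subseteq> {..<3}"
      using keys_add[of a b] by auto
  qed
qed

lemma Pset_single: "Poly_Mapping.keys m \<subseteq> {..<3} \<Longrightarrow> Poly_Mapping.single m c \<in> Pset"
  by (simp add: Pset_iff)

lemma Pset_Cst[simp]: "Cst c \<in> Pset" by (simp add: Cst_def Pset_single)
lemma Pset_1[simp]: "1 \<in> Pset" using Pset_Cst[of 1] by simp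
lemma Pset_Xv: "i < 3 \<Longrightarrow> Xv i \<in> Pset" by (simp add: Xv_def Pset_single)

lemma Pset_pow: "f \<in> Pset \<Longrightarrow> f ^ k \<in> Pset"
  by (induction k) (simp_all add: Pset_mult)

lemma Pset_sum: "(\<And>s. s \<in> S \<Longrightarrow> g s \<in> Pset) \<Longrightarrow> sum g S \<in> Pset"
  by (induction S rule: infinite_finite_induct) (simp_all add: Pset_add)

lemma mono_factor:
  assumes "Poly_Mapping.keys m \<subseteq> {..<3}"
  shows "Poly_Mapping.single m c = Cst c * Xv 0 ^ Poly_Mapping.lookup m 0 * Xv 1 ^ Poly_Mapping.lookup m 1 * Xv 2 ^ Poly_Mapping.lookup m 2"
proof -
  have m: "m = Poly_Mapping.single 0 (Poly_Mapping.lookup m 0) + Poly_Mapping.single 1 (Poly_Mapping.lookup m 1)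
     + Poly_Mapping.single 2 (Poly_Mapping.lookup m 2)"
  proof (rule poly_mapping_eqI)
    fix k
    show "Poly_Mapping.lookup m k = Poly_Mapping.lookup (Poly_Mapping.single 0 (Poly_Mapping.lookup m 0) + Poly_Mapping.single 1 (Poly_Mapping.lookup m 1)
     + Poly_Mapping.single 2 (Poly_Mapping.lookup m 2)) k"
    proof (cases "k < 3")
      case True
      then have "k = 0 \<or> k = 1 \<or> k = 2" by auto
      then show ?thesis by (auto simp: lookup_add lookup_single when_def)
    next
      case False
      then have "k \<notin> Poly_Mapping.keys m" using assms by auto
      then show ?thesis using False by (auto simp: lookup_add lookup_single when_def in_keys_iff)
    qed
  qed
  show ?thesis
    by (simp only: Xv_pow Cst_def mult_single add_0_left mult_1_right flip: m)
qed

lemma Pset_induct[consumes 1, case_names zero const add mult]: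
  fixes f :: "'k::comm_ring_1 mpoly"
  assumes f: "f \<in> Pset" and P0: "P 0" and PC: "\<And>c. P (Cst c)"
    and Padd: "\<And>g h. g \<in> Pset \<Longrightarrow> h \<in> Pset \<Longrightarrow> P g \<Longrightarrow> P h \<Longrightarrow> P (g + h)"
    and Pmult: "\<And>g i. g \<in> Pset \<Longrightarrow> i < 3 \<Longrightarrow> P g \<Longrightarrow> P (g * Xv i)"
  shows "P f"
proof -
  define T where "T c a b d = (Cst c * Xv 0 ^ a * Xv 1 ^ b * Xv 2 ^ d :: 'k mpoly)" for c a b d
  have TP: "T c a b d \<in> Pset" for c a b d
    unfolding T_def by (intro Pset_mult Pset_pow Pset_Xv Pset_Cst) auto
  have Ta: "P (T c a 0 0)" for c a
  proof (induction a)
    case 0 then show ?case using PC[of c] by (simp add: T_def)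
  next
    case (Suc a)
    have "T c (Suc a) 0 0 = T c a 0 0 * Xv 0" by (simp add: T_def mult_ac)
    then show ?case using Pmult[OF TP, of 0 c a 0 0] Suc by simp
  qed
  have Tb: "P (T c a b 0)" for c a b
  proof (induction b)
    case 0 then show ?case using Ta by simp
  next
    case (Suc b)
    have "T c a (Suc b) 0 = T c a b 0 * Xv 1" by (simp add: T_def mult_ac)
    then show ?case using Pmult[OF TP, of 1 c a b 0] Suc by simp
  qed
  have Td: "P (T c a b d)" for c a b d
  proof (induction d)
    case 0 then show ?case using Tb by simp
  next
    case (Suc d)
    have "T c a b (Suc d) = T c a b d * Xv 2" by (simp add: T_def mult_ac)
    then show ?case using Pmult[OF TP, of 2 c a b d] Suc by simp
  qed
  have sing: "P (Poly_Mapping.single m c) \<and> Poly_Mapping.single m c \<in> Pset" if "m \<in> Poly_Mapping.keys f" for m c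
  proof -
    have k: "Poly_Mapping.keys m \<subseteq> {..<3}" using f that unfolding Pset_iff by blast
    have eq: "Poly_Mapping.single m c = T c (Poly_Mapping.lookup m 0) (Poly_Mapping.lookup m 1) (Poly_Mapping.lookup m 2)"
      using mono_factor[OF k, of c] unfolding T_def .
    show ?thesis using Td Pset_single[OF k, of c] unfolding eq by blast
  qed
  have "S \<subseteq> Poly_Mapping.keys f \<Longrightarrow> P (\<Sum>m\<in>S. Poly_Mapping.single m (Poly_Mapping.lookup f m))
      \<and> (\<Sum>m\<in>S. Poly_Mapping.single m (Poly_Mapping.lookup f m)) \<in> Pset" for S
  proof (induction S rule: infinite_finite_induct)
    case (infinite A) then show ?case using P0 by simp
  next
    case empty then show ?case using P0 by simp
  next
    case (insert x F)
    then show ?case using sing[of x "Poly_Mapping.lookup f x"] by (auto intro!: Padd Pset_add)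
  qed
  then show ?thesis using poly_expand[of f] by (metis order_refl)
qed

section \<open>Linear forms and substitution\<close>

definition lin3 :: "'k::comm_ring_1 \<Rightarrow> 'k \<Rightarrow> 'k \<Rightarrow> 'k mpoly" where
  "lin3 x y z = Cst x * Xv 0 + Cst y * Xv 1 + Cst z * Xv 2"

definition rowlin :: "(nat \<Rightarrow> nat \<Rightarrow> 'k::comm_ring_1) \<Rightarrow> nat \<Rightarrow> 'k mpoly" where
  "rowlin M i = lin3 (M i 0) (M i 1) (M i 2)"

definition mon :: "(nat \<Rightarrow> nat \<Rightarrow> 'k::comm_ring_1) \<Rightarrow> (nat \<Rightarrow>\<^sub>0 nat) \<Rightarrow> 'k mpoly" where
  "mon M m = rowlin M 0 ^ Poly_Mapping.lookup m 0 * rowlin M 1 ^ Poly_Mapping.lookup m 1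
     * rowlin M 2 ^ Poly_Mapping.lookup m 2"

definition subst :: "(nat \<Rightarrow> nat \<Rightarrow> 'k::comm_ring_1) \<Rightarrow> 'k mpoly \<Rightarrow> 'k mpoly" where
  "subst M f = (\<Sum>m\<in>Poly_Mapping.keys f. Cst (Poly_Mapping.lookup f m) * mon M m)"

lemma subst_add: "subst M (f + g) = subst M f + subst M g"
  unfolding subst_def
  by (rule setsum_keys_plus_distrib[where f = "\<lambda>m v. Cst v * mon M m"])
     (simp_all add: Cst_add distrib_right)

lemma subst_0[simp]: "subst M 0 = 0" by (rule additive_0, rule subst_add)
lemma subst_uminus: "subst M (- f) = - subst M f" by (rule additive_uminus, rule subst_add)
lemma subst_diff: "subst M (f - g) = subst M f - subst M g" by (rule additive_diff, rule subst_add)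
lemma subst_sum: "subst M (sum g S) = (\<Sum>s\<in>S. subst M (g s))" by (rule additive_sum, rule subst_add)

lemma subst_single: "subst M (Poly_Mapping.single m c) = Cst c * mon M m"
  by (cases "c = 0") (simp_all add: subst_def)

lemma mon_add: "mon M (m + n) = mon M m * mon M n"
  by (simp add: mon_def lookup_add power_add mult_ac)

lemma mon_0: "mon M 0 = 1"
  by (simp add: mon_def)

lemma subst_mult: "subst M (f * g) = subst M f * subst M g"
  by (rule biadditive_eq[where F = "\<lambda>f g. subst M (f * g)" and G = "\<lambda>f g. subst M f * subst M g"])
     (simp_all add: subst_add distrib_left distrib_right mult_single subst_single mon_add Cst_mult mult_ac)

lemma subst_Cst[simp]: "subst M (Cst c) = Cst c"
  by (simp only: Cst_def subst_single mon_0 mult_1_right)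

lemma subst_1[simp]: "subst M 1 = 1"
  using subst_Cst[of M 1] by simp

lemma subst_Xv: "i < 3 \<Longrightarrow> subst M (Xv i) = rowlin M i"
proof -
  assume "i < 3"
  then have "i = 0 \<or> i = 1 \<or> i = 2" by auto
  then show ?thesis
    by (auto simp: Xv_def subst_single mon_def lookup_single)
qed

lemma subst_Cst_mult: "subst M (Cst c * f) = Cst c * subst M f"
  by (simp add: subst_mult)

lemma subst_lin3: "subst M (lin3 x y z) = lin3 (x * M 0 0 + y * M 1 0 + z * M 2 0)
   (x * M 0 1 + y * M 1 1 + z * M 2 1) (x * M 0 2 + y * M 1 2 + z * M 2 2)"
  by (simp add: lin3_def subst_add subst_Cst_mult subst_Xv rowlin_def Cst_add Cst_mult algebra_simps)

lemma lin3_Pset: "lin3 x y z \<in> Pset"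
  unfolding lin3_def by (intro Pset_add Pset_mult Pset_Cst Pset_Xv) auto

lemma mon_Pset: "mon M m \<in> Pset"
  unfolding mon_def rowlin_def by (intro Pset_mult Pset_pow lin3_Pset)

lemma subst_Pset: "subst M f \<in> Pset"
  unfolding subst_def by (intro Pset_sum Pset_mult Pset_Cst mon_Pset)

lemma hom_eq_Pset:
  fixes hA hB :: "'k::comm_ring_1 mpoly \<Rightarrow> 'k mpoly"
  assumes f: "f \<in> Pset"
    and a1: "\<And>x y. hA (x + y) = hA x + hA y" and m1: "\<And>x y. hA (x * y) = hA x * hA y"
    and a2: "\<And>x y. hB (x + y) = hB x + hB y" and m2: "\<And>x y. hB (x * y) = hB x * hB y"
    and c: "\<And>c. hA (Cst c) = hB (Cst c)" and x: "\<And>i. i < 3 \<Longrightarrow> hA (Xv i) = hB (Xv i)"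
  shows "hA f = hB f"
  using f
proof (induction rule: Pset_induct)
  case zero then show ?case using additive_0[OF a1] additive_0[OF a2] by simp
next
  case (const c) then show ?case using c by simp
next
  case (add g h) then show ?case using a1 a2 by simp
next
  case (mult g i) then show ?case using m1 m2 x by simp
qed

lemma subst_subst_id:
  assumes "\<And>i. i < 3 \<Longrightarrow> subst N (rowlin M i) = Xv i" and "f \<in> Pset"
  shows "subst N (subst M f) = f"
  using hom_eq_Pset[where hA = "\<lambda>f. subst N (subst M f)" and hB = "\<lambda>f. f", OF assms(2)]
  by (simp add: subst_add subst_mult subst_Xv assms(1))

lemma subst_bij:
  assumes "\<And>i. i < 3 \<Longrightarrow> subst N (rowlin M i) = Xv i"
    and "\<And>i. i < 3 \<Longrightarrow> subst M (rowlin N i) = Xv i"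
  shows "bij_betw (subst M) Pset Pset"
  by (rule bij_betw_byWitness[where f' = "subst N"])
     (auto simp: subst_subst_id assms subst_Pset)

declare One_nat_def [simp del]

lemma sum3: "(\<Sum>i<(3::nat). F i) = F 0 + F 1 + F 2"
proof -
  have "{..<3::nat} = {0,1,2}" by auto
  then show ?thesis by (simp add: add_ac)
qed

section \<open>Bracket\<close>

lemma pbr_alt: "pbr f g = (pd 1 f * pd 2 g - pd 2 f * pd 1 g) * (Cst 3 * Xv 0 * Xv 0)"
  by (simp add: pbr_def sum3 Bgen_def algebra_simps)

lemma pbr_add_left: "pbr (f + h) g = pbr f g + pbr h g"
  by (simp add: pbr_alt pd_add algebra_simps)

lemma pbr_add_right: "pbr g (f + h) = pbr g f + pbr g h"
  by (simp add: pbr_alt pd_add algebra_simps)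

lemma pbr_mult_left: "pbr (f * h) g = f * pbr h g + h * pbr f g"
  by (simp add: pbr_alt pd_mult algebra_simps)

lemma pbr_mult_right: "pbr g (f * h) = f * pbr g h + h * pbr g f"
  by (simp add: pbr_alt pd_mult algebra_simps)

lemma pbr_Cst_left[simp]: "pbr (Cst c) g = 0"
  by (simp add: pbr_alt)

lemma pbr_Cst_right[simp]: "pbr g (Cst c) = 0"
  by (simp add: pbr_alt)

lemma pbr_0_left[simp]: "pbr 0 g = 0"
  by (simp add: pbr_alt)

lemma pbr_0_right[simp]: "pbr g 0 = 0"
  by (simp add: pbr_alt)

lemma pd_lin3: "pd 1 (lin3 x y z) = Cst y" "pd 2 (lin3 x y z) = Cst z"
  by (simp_all add: lin3_def pd_add pd_Cst_mult pd_Xv)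

lemma pbr_lin3: "pbr (lin3 x y z) (lin3 x' y' z') = Cst (3 * (y * z' - z * y')) * (Xv 0 * Xv 0)"
  by (simp add: pbr_alt pd_lin3 Cst_mult Cst_diff Cst_numeral algebra_simps)

lemma Bgen_cases:
  assumes "i < 3" "j < 3"
  shows "Bgen i j = (if i = 1 \<and> j = 2 then Cst 3 * Xv 0 * Xv 0 else if i = 2 \<and> j = 1 then - (Cst 3 * Xv 0 * Xv 0) else 0)"
  by (simp add: Bgen_def)

lemma pbr_Xv: "pbr (Xv i) (Xv j) = Bgen i j"
  by (simp add: pbr_alt pd_Xv Bgen_def)

definition HM :: "(nat \<Rightarrow> nat \<Rightarrow> 'k::comm_ring_1) \<Rightarrow> bool" where
  "HM M \<longleftrightarrow> M 0 1 = 0 \<and> M 0 2 = 0 \<and> M 0 0 ^ 2 = M 1 1 * M 2 2 - M 1 2 * M 2 1"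

lemma rowlin0: "HM M \<Longrightarrow> rowlin M 0 = Cst (M 0 0) * Xv 0"
  by (simp add: HM_def rowlin_def lin3_def)

lemma gen_ok:
  assumes hm: "HM M" and ij: "i < 3" "j < 3"
  shows "subst M (Bgen i j) = pbr (rowlin M i) (rowlin M j)"
proof -
  have r: "pbr (rowlin M i) (rowlin M j) = Cst (3 * (M i 1 * M j 2 - M i 2 * M j 1)) * (Xv 0 * Xv 0)"
    by (simp add: rowlin_def pbr_lin3)
  have sq: "subst M (Cst 3 * Xv 0 * Xv 0) = Cst (3 * (M 1 1 * M 2 2 - M 1 2 * M 2 1)) * (Xv 0 * Xv 0)"
  proof -
    have "subst M (Cst 3 * Xv 0 * Xv 0) = Cst 3 * (Cst (M 0 0) * Xv 0) * (Cst (M 0 0) * Xv 0)"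
      by (simp add: subst_mult subst_Xv rowlin0[OF hm])
    also have "\<dots> = Cst (3 * M 0 0 ^ 2) * (Xv 0 * Xv 0)"
      by (simp add: Cst_mult power2_eq_square mult_ac)
    finally show ?thesis using hm by (simp add: HM_def)
  qed
  have "i = 0 \<or> i = 1 \<or> i = 2" "j = 0 \<or> j = 1 \<or> j = 2" using ij by auto
  then show ?thesis
    using hm unfolding r
    by (auto simp: Bgen_def sq subst_uminus HM_def simp flip: Cst_uminus)
       (simp_all add: algebra_simps Cst_diff Cst_mult)
qed

lemma subst_pbr_Xv:
  assumes hm: "HM M" and g: "g \<in> Pset" and i: "i < 3"
  shows "subst M (pbr (Xv i) g) = pbr (rowlin M i) (subst M g)"
  using g
proof (induction rule: Pset_induct)
  case zero then show ?case by simp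
next
  case (const c) then show ?case by simp
next
  case (add g h) then show ?case by (simp add: pbr_add_right subst_add)
next
  case (mult g j)
  then show ?case
    by (simp add: pbr_mult_right subst_add subst_mult pbr_Xv gen_ok[OF hm i] subst_Xv)
qed

lemma subst_pbr:
  assumes hm: "HM M" and f: "f \<in> Pset" and g: "g \<in> Pset"
  shows "subst M (pbr f g) = pbr (subst M f) (subst M g)"
  using f
proof (induction rule: Pset_induct)
  case zero then show ?case by simp
next
  case (const c) then show ?case by simp
next
  case (add f h) then show ?case by (simp add: pbr_add_left subst_add)
next
  case (mult f i)
  then show ?case
    by (simp add: pbr_mult_left subst_add subst_mult subst_pbr_Xv[OF hm g] subst_Xv)
qed

declare One_nat_def [simp del]

section \<open>Degrees\<close>

lemma mdeg_sum: "finite S \<Longrightarrow> Poly_Mapping.keys m \<subseteq> S \<Longrightarrow> mdeg m = (\<Sum>i\<in>S. Poly_Mapping.lookup m i)"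
  unfolding mdeg_def by (rule sum.mono_neutral_left) (auto simp: in_keys_iff)

lemma mdeg_add: "mdeg (a + b) = mdeg a + mdeg b"
proof -
  let ?S = "Poly_Mapping.keys a \<union> Poly_Mapping.keys b"
  have "mdeg (a + b) = (\<Sum>i\<in>?S. Poly_Mapping.lookup (a + b) i)"
    by (rule mdeg_sum) (auto simp: keys_add)
  also have "\<dots> = (\<Sum>i\<in>?S. Poly_Mapping.lookup a i) + (\<Sum>i\<in>?S. Poly_Mapping.lookup b i)"
    by (simp add: lookup_add sum.distrib)
  also have "\<dots> = mdeg a + mdeg b"
    by (simp add: mdeg_sum[symmetric])
  finally show ?thesis .
qed

lemma mdeg_0[simp]: "mdeg 0 = 0" by (simp add: mdeg_def)

lemma mdeg_single: "mdeg (Poly_Mapping.single i k) = k"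
  by (cases "k = 0") (simp_all add: mdeg_def)

lemma mdeg3: "Poly_Mapping.keys m \<subseteq> {..<3} \<Longrightarrow> mdeg m = Poly_Mapping.lookup m 0 + Poly_Mapping.lookup m 1 + Poly_Mapping.lookup m 2"
proof -
  assume k: "Poly_Mapping.keys m \<subseteq> {..<3}"
  show ?thesis by (simp add: mdeg_sum[OF _ k] sum3)
qed

lemma Pdeg_iff: "f \<in> Pdeg n \<longleftrightarrow> f \<in> Pset \<and> (\<forall>m\<in>Poly_Mapping.keys f. mdeg m = n)"
  by (simp add: Pdeg_def)

lemma Pdeg_0[simp]: "0 \<in> Pdeg n" by (simp add: Pdeg_iff)

lemma Pdeg_add: "f \<in> Pdeg n \<Longrightarrow> g \<in> Pdeg n \<Longrightarrow> f + g \<in> Pdeg n"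
proof -
  assume f: "f \<in> Pdeg n" and g: "g \<in> Pdeg n"
  have "\<forall>m\<in>Poly_Mapping.keys (f + g). mdeg m = n"
  proof
    fix m assume "m \<in> Poly_Mapping.keys (f + g)"
    then have "m \<in> Poly_Mapping.keys f \<or> m \<in> Poly_Mapping.keys g" using keys_add[of f g] by auto
    then show "mdeg m = n" using f g unfolding Pdeg_iff by auto
  qed
  then show ?thesis using f g Pset_add unfolding Pdeg_iff by auto
qed

lemma Pdeg_mult: "f \<in> Pdeg p \<Longrightarrow> g \<in> Pdeg q \<Longrightarrow> f * g \<in> Pdeg (p + q)"
proof -
  assume f: "f \<in> Pdeg p" and g: "g \<in> Pdeg q"
  have "\<forall>m\<in>Poly_Mapping.keys (f * g). mdeg m = p + q"
  proof
    fix m assume "m \<in> Poly_Mapping.keys (f * g)"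
    then obtain a b where "m = a + b" "a \<in> Poly_Mapping.keys f" "b \<in> Poly_Mapping.keys g"
      using keys_mult by blast
    moreover have "mdeg a = p" "mdeg b = q"
      using f g \<open>a \<in> _\<close> \<open>b \<in> _\<close> unfolding Pdeg_iff by auto
    ultimately show "mdeg m = p + q" by (simp add: mdeg_add)
  qed
  then show ?thesis using f g Pset_mult unfolding Pdeg_iff by auto
qed

lemma Pdeg_Cst: "Cst c \<in> Pdeg 0"
  using Pset_Cst[of c] by (simp add: Pdeg_iff Cst_def)

lemma Pdeg_Xv: "i < 3 \<Longrightarrow> Xv i \<in> Pdeg 1"
  by (simp add: Pdeg_iff Pset_Xv) (simp add: Xv_def mdeg_single)

lemma Pdeg_pow: "f \<in> Pdeg p \<Longrightarrow> f ^ k \<in> Pdeg (k * p)"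
proof (induction k)
  case 0 then show ?case using Pdeg_Cst[of 1] by simp
next
  case (Suc k) then show ?case using Pdeg_mult[of f p "f ^ k" "k * p"] by simp
qed

lemma Pdeg_sum: "(\<And>s. s \<in> S \<Longrightarrow> g s \<in> Pdeg n) \<Longrightarrow> sum g S \<in> Pdeg n"
  by (induction S rule: infinite_finite_induct) (simp_all add: Pdeg_add)

lemma Pdeg_lin3:
  fixes x y z :: "'k::comm_ring_1"
  shows "lin3 x y z \<in> Pdeg 1"
proof -
  have "Cst c * Xv i \<in> Pdeg 1" if "i < 3" for c :: 'k and i :: nat
    using Pdeg_mult[OF Pdeg_Cst Pdeg_Xv[OF that], of c] by simp
  then show ?thesis unfolding lin3_def by (intro Pdeg_add) auto
qed

lemma Pdeg_mon: "mon M m \<in> Pdeg (Poly_Mapping.lookup m 0 + Poly_Mapping.lookup m 1 + Poly_Mapping.lookup m 2)"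
proof -
  have p: "rowlin M i ^ k \<in> Pdeg k" for i k
    using Pdeg_pow[OF Pdeg_lin3[of "M i 0" "M i 1" "M i 2"], of k] by (simp add: rowlin_def)
  show ?thesis unfolding mon_def by (intro Pdeg_mult p)
qed

lemma subst_Pdeg: "f \<in> Pdeg n \<Longrightarrow> subst M f \<in> Pdeg n"
proof -
  assume f: "f \<in> Pdeg n"
  show ?thesis unfolding subst_def
  proof (rule Pdeg_sum)
    fix m assume m: "m \<in> Poly_Mapping.keys f"
    then have k: "Poly_Mapping.keys m \<subseteq> {..<3}" and d: "mdeg m = n"
      using f unfolding Pdeg_iff Pset_iff by auto
    show "Cst (Poly_Mapping.lookup f m) * mon M m \<in> Pdeg n"
      using Pdeg_mult[OF Pdeg_Cst Pdeg_mon, of "Poly_Mapping.lookup f m" M m] d mdeg3[OF k] by simp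
  qed
qed

declare One_nat_def [simp del]

lemma lin3_X0: "x = 1 \<Longrightarrow> y = 0 \<Longrightarrow> z = 0 \<Longrightarrow> lin3 x y z = Xv 0"
  by (simp add: lin3_def)
lemma lin3_X1: "x = 0 \<Longrightarrow> y = 1 \<Longrightarrow> z = 0 \<Longrightarrow> lin3 x y z = Xv 1"
  by (simp add: lin3_def)
lemma lin3_X2: "x = 0 \<Longrightarrow> y = 0 \<Longrightarrow> z = 1 \<Longrightarrow> lin3 x y z = Xv 2"
  by (simp add: lin3_def)

lemma aut_subst:
  fixes M :: "nat \<Rightarrow> nat \<Rightarrow> 'k::comm_ring_1"
  assumes hm: "HM M" and bij: "bij_betw (subst M) Pset Pset"
  shows "graded_poisson_aut (subst M)"
  unfolding graded_poisson_aut_def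
  using bij subst_Pdeg
  by (auto simp: subst_add subst_mult subst_pbr[OF hm] subst_Cst_mult)

lemma three_cases: "(i::nat) < 3 \<Longrightarrow> (i = 0 \<Longrightarrow> P) \<Longrightarrow> (i = 1 \<Longrightarrow> P) \<Longrightarrow> (i = 2 \<Longrightarrow> P) \<Longrightarrow> P"
  by (cases i; cases "i - 1"; auto simp: One_nat_def)

lemma matrix_aut:
  fixes \<epsilon> a b c d e f :: "'k::field"
  assumes D: "b * f \<noteq> c * e" and E: "\<epsilon> ^ 2 = b * f - c * e"
  defines "A \<equiv> mat_of_rows_list 3 [[\<epsilon>, 0, 0], [a, b, c], [d, e, f]]"
  shows "graded_poisson_aut (subst (\<lambda>i k. A $$ (i, k))) \<and> has_matrix (subst (\<lambda>i k. A $$ (i, k))) A"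
proof -
  let ?M = "\<lambda>i k. A $$ (i, k)"
  define D where "D = b * f - c * e"
  have D0: "D \<noteq> 0" using D by (simp add: D_def)
  have e0: "\<epsilon> \<noteq> 0" using E D0 by (auto simp: D_def)
  define N where "N = mat_of_rows_list 3 [[1 / \<epsilon>, 0, 0],
     [(c * d - a * f) / (\<epsilon> * D), f / D, - c / D], [(a * e - b * d) / (\<epsilon> * D), - e / D, b / D]]"
  let ?N = "\<lambda>i k. N $$ (i, k)"
  have hm: "HM ?M" using E by (simp add: HM_def A_def mrl3_idx)
  have D': "b * f - c * e \<noteq> 0" using D0 by (simp add: D_def)
  have c0: "subst ?N (rowlin ?M 0) = Xv 0"
    by (simp add: rowlin_def subst_lin3 A_def N_def mrl3_idx e0 lin3_X0)
  have c1: "subst ?N (rowlin ?M 1) = Xv 1"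
    by (simp add: rowlin_def subst_lin3 A_def N_def mrl3_idx e0, rule lin3_X1)
       (simp_all add: e0 D0 field_simps, simp_all add: D_def algebra_simps)
  have c2: "subst ?N (rowlin ?M 2) = Xv 2"
    by (simp add: rowlin_def subst_lin3 A_def N_def mrl3_idx e0, rule lin3_X2)
       (simp_all add: e0 D0 field_simps, simp_all add: D_def algebra_simps)
  have d0: "subst ?M (rowlin ?N 0) = Xv 0"
    by (simp add: rowlin_def subst_lin3 A_def N_def mrl3_idx e0 lin3_X0)
  have d1: "subst ?M (rowlin ?N 1) = Xv 1"
    by (simp add: rowlin_def subst_lin3 A_def N_def mrl3_idx e0, rule lin3_X1)
       (simp_all add: e0 D0 field_simps, simp_all add: D_def algebra_simps)
  have d2: "subst ?M (rowlin ?N 2) = Xv 2"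
    by (simp add: rowlin_def subst_lin3 A_def N_def mrl3_idx e0, rule lin3_X2)
       (simp_all add: e0 D0 field_simps, simp_all add: D_def algebra_simps)
  have inv1: "subst ?N (rowlin ?M i) = Xv i" if "i < 3" for i
    by (rule three_cases[OF that]) (simp_all add: c0 c1 c2)
  have inv2: "subst ?M (rowlin ?N i) = Xv i" if "i < 3" for i
    by (rule three_cases[OF that]) (simp_all add: d0 d1 d2)
  have g: "graded_poisson_aut (subst ?M)"
    by (rule aut_subst[OF hm subst_bij[OF inv1 inv2]])
  have h: "has_matrix (subst ?M) A"
    unfolding has_matrix_def
    by (auto simp: A_def mrl3_carrier subst_Xv rowlin_def lin3_def sum3)
  show ?thesis using g h by simp
qed

declare One_nat_def [simp del]
declare single_numeral [simp del]

lemma ss_eq: "(Poly_Mapping.single i (1::nat) + Poly_Mapping.single j 1 = Poly_Mapping.single t 2) \<longleftrightarrow> (i = t \<and> j = t)"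
proof
  assume h: "Poly_Mapping.single i (1::nat) + Poly_Mapping.single j 1 = Poly_Mapping.single t 2"
  have "Poly_Mapping.lookup (Poly_Mapping.single i (1::nat) + Poly_Mapping.single j 1) t = 2"
    by (simp add: h)
  then show "i = t \<and> j = t"
    by (auto simp: lookup_add lookup_single when_def split: if_splits)
next
  assume "i = t \<and> j = t"
  then show "Poly_Mapping.single i (1::nat) + Poly_Mapping.single j 1 = Poly_Mapping.single t 2"
    by (simp flip: single_add)
qed

lemma lookup_XX: "Poly_Mapping.lookup (Xv i * Xv j :: 'k::comm_ring_1 mpoly) (Poly_Mapping.single t 2) = (if i = t \<and> j = t then 1 else 0)"
  by (simp add: Xv_def mult_single lookup_single when_def ss_eq)

lemma lin3_sq: "lin3 x y z * lin3 x' y' z' =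
   Cst (x * x') * (Xv 0 * Xv 0) + Cst (y * y') * (Xv 1 * Xv 1) + Cst (z * z') * (Xv 2 * Xv 2)
   + Cst (x * y' + y * x') * (Xv 0 * Xv 1) + Cst (x * z' + z * x') * (Xv 0 * Xv 2)
   + Cst (y * z' + z * y') * (Xv 1 * Xv 2)"
  by (simp add: lin3_def Cst_add Cst_mult algebra_simps)

lemma lookup_lin3_sq:
  "Poly_Mapping.lookup (lin3 x y z * lin3 x' y' z') (Poly_Mapping.single 0 2) = x * x'"
  "Poly_Mapping.lookup (lin3 x y z * lin3 x' y' z') (Poly_Mapping.single 1 2) = y * y'"
  "Poly_Mapping.lookup (lin3 x y z * lin3 x' y' z') (Poly_Mapping.single 2 2) = z * z'"
  by (simp_all add: lin3_sq lookup_add lookup_Cst_mult lookup_XX)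

lemma lookup_X00:
  "Poly_Mapping.lookup (Cst k * (Xv 0 * Xv 0)) (Poly_Mapping.single t 2) = (if t = 0 then k else 0)"
  by (simp add: lookup_Cst_mult lookup_XX)

lemma Xv_nonzero: "Xv i \<noteq> (0 :: 'k::comm_ring_1 mpoly)"
proof -
  have "Poly_Mapping.lookup (Xv i :: 'k mpoly) (Poly_Mapping.single i 1) = 1" by (simp add: Xv_def)
  then show ?thesis by (metis lookup_zero zero_neq_one)
qed

lemma has_matrix_lin3:
  assumes "has_matrix \<phi> A" "i < 3"
  shows "\<phi> (Xv i) = lin3 (A $$ (i, 0)) (A $$ (i, 1)) (A $$ (i, 2))"
  using assms by (simp add: has_matrix_def sum3 lin3_def)

lemma aut_forward:
  fixes \<phi> :: "'k::field_char_0 mpoly \<Rightarrow> 'k mpoly" and A :: "'k mat"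
  assumes g: "graded_poisson_aut \<phi>" and h: "has_matrix \<phi> A"
  shows "A = mat_of_rows_list 3 [[A $$ (0,0), 0, 0], [A $$ (1,0), A $$ (1,1), A $$ (1,2)], [A $$ (2,0), A $$ (2,1), A $$ (2,2)]]
     \<and> A $$ (1,1) * A $$ (2,2) \<noteq> A $$ (1,2) * A $$ (2,1)
     \<and> A $$ (0,0) ^ 2 = A $$ (1,1) * A $$ (2,2) - A $$ (1,2) * A $$ (2,1)"
proof -
  define u where "u i k = A $$ (i, k)" for i k
  have L: "\<phi> (Xv i) = lin3 (u i 0) (u i 1) (u i 2)" if "i < 3" for i
    using has_matrix_lin3[OF h that] by (simp add: u_def)
  have add: "\<phi> (x + y) = \<phi> x + \<phi> y" and mul: "\<phi> (x * y) = \<phi> x * \<phi> y"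
    and br: "\<phi> (pbr x y) = pbr (\<phi> x) (\<phi> y)" if "x \<in> Pset" "y \<in> Pset" for x y
    using g that unfolding graded_poisson_aut_def by auto
  have cm: "\<phi> (Cst c * x) = Cst c * \<phi> x" if "x \<in> Pset" for c x
    using g that unfolding graded_poisson_aut_def by auto
  have inj: "inj_on \<phi> Pset" using g unfolding graded_poisson_aut_def bij_betw_def by auto
  have phi0: "\<phi> 0 = 0" using add[of 0 0] by simp
  have X0P: "Xv 0 \<in> Pset" "Xv 1 \<in> Pset" "Xv 2 \<in> Pset" by (simp_all add: Pset_Xv)
  have "\<phi> (Cst 3 * Xv 0 * Xv 0) = Cst 3 * (\<phi> (Xv 0) * \<phi> (Xv 0))"
    using mul[of "Cst 3 * Xv 0" "Xv 0"] cm[of "Xv 0" 3] X0P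
    by (simp add: Pset_mult mult.assoc)
  also have "Cst 3 * Xv 0 * Xv 0 = pbr (Xv 1) (Xv 2)" by (simp add: pbr_Xv Bgen_def)
  finally have c: "\<phi> (pbr (Xv 1) (Xv 2)) = Cst 3 * (\<phi> (Xv 0) * \<phi> (Xv 0))" .
  have b: "\<phi> (pbr (Xv 1) (Xv 2)) = pbr (\<phi> (Xv 1)) (\<phi> (Xv 2))" by (rule br[OF X0P(2) X0P(3)])
  from b c have "pbr (\<phi> (Xv 1)) (\<phi> (Xv 2)) = Cst 3 * (\<phi> (Xv 0) * \<phi> (Xv 0))" by simp
  then have key: "Cst (3 * (u 1 1 * u 2 2 - u 1 2 * u 2 1)) * (Xv 0 * Xv 0) =
      Cst 3 * (lin3 (u 0 0) (u 0 1) (u 0 2) * lin3 (u 0 0) (u 0 1) (u 0 2))"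
    by (simp add: L pbr_lin3)
  have k1: "3 * (u 0 1 * u 0 1) = 0"
    using arg_cong[OF key, of "\<lambda>p. Poly_Mapping.lookup p (Poly_Mapping.single 1 2)"]
    by (simp add: lookup_X00 lookup_Cst_mult lookup_lin3_sq lookup_XX)
  have k2: "3 * (u 0 2 * u 0 2) = 0"
    using arg_cong[OF key, of "\<lambda>p. Poly_Mapping.lookup p (Poly_Mapping.single 2 2)"]
    by (simp add: lookup_X00 lookup_Cst_mult lookup_lin3_sq lookup_XX)
  have k0: "3 * (u 1 1 * u 2 2 - u 1 2 * u 2 1) = 3 * (u 0 0 * u 0 0)"
    using arg_cong[OF key, of "\<lambda>p. Poly_Mapping.lookup p (Poly_Mapping.single 0 2)"]
    by (simp add: lookup_X00 lookup_Cst_mult lookup_lin3_sq lookup_XX)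
  have u01: "u 0 1 = 0" using k1 by simp
  have u02: "u 0 2 = 0" using k2 by simp
  have k0': "u 1 1 * u 2 2 - u 1 2 * u 2 1 = u 0 0 * u 0 0"
    using k0 by (subst (asm) mult_cancel_left) simp
  have sq: "u 0 0 ^ 2 = u 1 1 * u 2 2 - u 1 2 * u 2 1" using k0' by (simp add: power2_eq_square)
  have nz: "u 1 1 * u 2 2 \<noteq> u 1 2 * u 2 1"
  proof
    assume "u 1 1 * u 2 2 = u 1 2 * u 2 1"
    then have "u 0 0 = 0" using sq by simp
    then have "\<phi> (Xv 0) = \<phi> 0" using L[of 0] u01 u02 phi0 by (simp add: lin3_def)
    then have "Xv 0 = (0 :: 'k mpoly)" using inj X0P by (auto dest: inj_onD)
    then show False using Xv_nonzero by blast
  qed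
  have carr: "A \<in> carrier_mat 3 3" using h by (simp add: has_matrix_def)
  define R where "R = mat_of_rows_list 3 [[u 0 0, 0, 0], [u 1 0, u 1 1, u 1 2], [u 2 0, u 2 1, u 2 2]]"
  have Rc: "R \<in> carrier_mat 3 3" unfolding R_def by (rule mrl3_carrier)
  have "A = R"
  proof (rule eq_matI)
    fix i j assume "i < dim_row R" "j < dim_col R"
    then have ij: "i < 3" "j < 3" using carrier_matD[OF Rc] by simp_all
    show "A $$ (i, j) = R $$ (i, j)"
      by (rule three_cases[OF ij(1)]; rule three_cases[OF ij(2)])
         (simp_all add: R_def mrl3_idx u01[unfolded u_def] u02[unfolded u_def] u_def)
  qed (simp_all add: carrier_matD[OF Rc] carrier_matD[OF carr])
  then show ?thesis using nz sq by (simp add: u_def R_def)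
qed

declare One_nat_def [simp del]
declare single_numeral [simp del]
declare single_one [simp del]

lemma refl_alg:
  fixes \<epsilon> s D \<xi> :: "'k::field_char_0"
  assumes e1: "\<epsilon> * D = \<xi>" and e2: "D + \<epsilon> * s = 1 + 2 * \<xi>" and e3: "\<epsilon> + s = 2 + \<xi>"
    and e4: "\<epsilon> ^ 2 = D" and x1: "\<xi> \<noteq> 1"
  shows "\<epsilon> = -1 \<and> \<xi> = -1 \<and> s = 2 \<and> D = 1"
proof -
  have s: "s = 2 + \<xi> - \<epsilon>" using e3 by (simp add: algebra_simps)
  have "\<xi> = \<epsilon> * \<epsilon> ^ 2" using e1 e4 by simp
  then have x: "\<xi> = \<epsilon> ^ 3" by (simp add: power3_eq_cube power2_eq_square)
  have "\<epsilon> ^ 2 + \<epsilon> * (2 + \<epsilon> ^ 3 - \<epsilon>) = 1 + 2 * \<epsilon> ^ 3"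
    using e2 e4 s x by simp
  then have "(\<epsilon> - 1) ^ 3 * (\<epsilon> + 1) = 0"
    by (simp add: power3_eq_cube power2_eq_square algebra_simps)
  then have "\<epsilon> = 1 \<or> \<epsilon> = -1"
    by (auto simp: eq_neg_iff_add_eq_0)
  moreover have "\<epsilon> \<noteq> 1" using x x1 by auto
  ultimately have em: "\<epsilon> = -1" by simp
  then show ?thesis using x s e4 by simp
qed

lemma single_key_eq: "(Poly_Mapping.single i (1::nat) = Poly_Mapping.single j 1) \<longleftrightarrow> i = j"
proof
  assume h: "Poly_Mapping.single i (1::nat) = Poly_Mapping.single j 1"
  have "Poly_Mapping.lookup (Poly_Mapping.single i (1::nat)) i = Poly_Mapping.lookup (Poly_Mapping.single j 1) i"
    by (simp only: h)
  then show "i = j" by (simp add: lookup_single when_def split: if_splits)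
qed simp

lemma lookup_lin3:
  "Poly_Mapping.lookup (lin3 x y z) (Poly_Mapping.single 0 1) = x"
  "Poly_Mapping.lookup (lin3 x y z) (Poly_Mapping.single 1 1) = y"
  "Poly_Mapping.lookup (lin3 x y z) (Poly_Mapping.single 2 1) = z"
  by (simp_all add: lin3_def lookup_add lookup_Cst_mult Xv_def lookup_single when_def single_key_eq)

lemma lin3_inj:
  assumes "lin3 x y z = lin3 x' y' z'"
  shows "x = x' \<and> y = y' \<and> z = z'"
proof -
  have "Poly_Mapping.lookup (lin3 x y z) (Poly_Mapping.single k 1) = Poly_Mapping.lookup (lin3 x' y' z') (Poly_Mapping.single k 1)" for k
    using assms by simp
  from this[of 0] this[of 1] this[of 2] show ?thesis by (simp add: lookup_lin3)
qed

lemma has_matrix_unique: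
  assumes "has_matrix \<phi> A" "has_matrix \<phi> B"
  shows "A = B"
proof (rule eq_matI)
  have cA: "A \<in> carrier_mat 3 3" and cB: "B \<in> carrier_mat 3 3" using assms by (auto simp: has_matrix_def)
  have row: "A $$ (i, 0) = B $$ (i, 0) \<and> A $$ (i, 1) = B $$ (i, 1) \<and> A $$ (i, 2) = B $$ (i, 2)" if "i < 3" for i
    using has_matrix_lin3[OF assms(1) that] has_matrix_lin3[OF assms(2) that] by (intro lin3_inj) simp
  fix i j assume "i < dim_row B" "j < dim_col B"
  then have ij: "i < 3" "j < 3" using carrier_matD[OF cB] by simp_all
  show "A $$ (i, j) = B $$ (i, j)"
    by (rule three_cases[OF ij(2)]) (use row[OF ij(1)] in simp_all)
next
  show "dim_row A = dim_row B" "dim_col A = dim_col B"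
    using assms by (auto simp: has_matrix_def carrier_matD)
qed

lemma lin3_comb: "Cst x * lin3 p q r + Cst y * lin3 p' q' r' + Cst z * lin3 p'' q'' r'' =
  lin3 (x * p + y * p' + z * p'') (x * q + y * q' + z * q'') (x * r + y * r' + z * r'')"
  by (simp add: lin3_def Cst_add Cst_mult algebra_simps)

lemma phi_lin3:
  assumes g: "graded_poisson_aut \<phi>" and h: "has_matrix \<phi> A"
  shows "\<phi> (lin3 x y z) = lin3 (x * A $$ (0,0) + y * A $$ (1,0) + z * A $$ (2,0))
     (x * A $$ (0,1) + y * A $$ (1,1) + z * A $$ (2,1)) (x * A $$ (0,2) + y * A $$ (1,2) + z * A $$ (2,2))"
proof -
  have add: "\<phi> (p + q) = \<phi> p + \<phi> q" if "p \<in> Pset" "q \<in> Pset" for p q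
    using g that unfolding graded_poisson_aut_def by auto
  have cm: "\<phi> (Cst c * p) = Cst c * \<phi> p" if "p \<in> Pset" for c p
    using g that unfolding graded_poisson_aut_def by auto
  have P: "Cst c * Xv i \<in> Pset" if "i < 3" for c i by (intro Pset_mult Pset_Cst Pset_Xv that)
  have "\<phi> (lin3 x y z) = Cst x * \<phi> (Xv 0) + Cst y * \<phi> (Xv 1) + Cst z * \<phi> (Xv 2)"
    unfolding lin3_def
    by (simp add: add P Pset_add cm Pset_Xv)
  also have "\<dots> = lin3 (x * A $$ (0,0) + y * A $$ (1,0) + z * A $$ (2,0))
     (x * A $$ (0,1) + y * A $$ (1,1) + z * A $$ (2,1)) (x * A $$ (0,2) + y * A $$ (1,2) + z * A $$ (2,2))"
  proof -
    have r: "\<phi> (Xv i) = lin3 (A $$ (i, 0)) (A $$ (i, 1)) (A $$ (i, 2))" if "i < 3" for i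
      by (rule has_matrix_lin3[OF h that])
    have r0: "\<phi> (Xv 0) = lin3 (A $$ (0, 0)) (A $$ (0, 1)) (A $$ (0, 2))" by (rule r) simp
    have r1: "\<phi> (Xv 1) = lin3 (A $$ (1, 0)) (A $$ (1, 1)) (A $$ (1, 2))" by (rule r) simp
    have r2: "\<phi> (Xv 2) = lin3 (A $$ (2, 0)) (A $$ (2, 1)) (A $$ (2, 2))" by (rule r) simp
    show ?thesis by (simp only: r0 r1 r2 lin3_comb)
  qed
  finally show ?thesis .
qed

declare One_nat_def [simp del]
declare single_numeral [simp del]
declare single_one [simp del]

lemma cp_coeffs:
  fixes \<epsilon> D s \<xi> :: "'k::comm_ring_1"
  assumes "[:-\<epsilon>, 1:] * [:D, -s, 1:] = [:-1, 1:] ^ 2 * [:-\<xi>, 1:]"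
  shows "\<epsilon> * D = \<xi> \<and> D + \<epsilon> * s = 1 + 2 * \<xi> \<and> \<epsilon> + s = 2 + \<xi>"
proof -
  have L: "[:-\<epsilon>, 1:] * [:D, -s, 1:] = [:-(\<epsilon> * D), D + \<epsilon> * s, -(\<epsilon> + s), 1:]"
    by simp
  have R: "[:-1, 1:] ^ 2 * [:-\<xi>, 1:] = [:-\<xi>, 1 + 2 * \<xi>, -(2 + \<xi>), 1 :: 'k:]"
    by (simp add: power2_eq_square)
  have h: "\<epsilon> * D = \<xi>" "D + \<epsilon> * s = 1 + 2 * \<xi>" "-(\<epsilon> + s) = -(2 + \<xi>)"
    using assms unfolding L R by (simp_all only: pCons_eq_iff) simp_all
  from h(3) have "\<epsilon> + s = 2 + \<xi>" by (simp only: neg_equal_iff_equal)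
  with h(1,2) show ?thesis by blast
qed

lemma refl_forward:
  fixes \<phi> :: "'k::field_char_0 mpoly \<Rightarrow> 'k mpoly"
  assumes r: "poisson_reflection \<phi>" and h: "has_matrix \<phi> A"
  shows "A = mat_of_rows_list 3 [[-1, 0, 0], [A $$ (1,0), 1, 0], [A $$ (2,0), 0, 1]]"
proof -
  have g: "graded_poisson_aut \<phi>" using r by (simp add: poisson_reflection_def)
  obtain n where n0: "n > 0" and nid: "\<And>p. p \<in> Pset \<Longrightarrow> (\<phi> ^^ n) p = p"
    using r unfolding poisson_reflection_def by blast
  obtain A' m \<xi> where h': "has_matrix \<phi> A'" and x1: "\<xi> \<noteq> 1"
    and cp: "char_poly A' = [:-1, 1:] ^ 2 * [:-\<xi>, 1:]"
    using r unfolding poisson_reflection_def by blast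
  have AA: "A' = A" by (rule has_matrix_unique[OF h' h])
  define \<epsilon> where "\<epsilon> = A $$ (0,0)"
  define a where "a = A $$ (1,0)"
  define b where "b = A $$ (1,1)"
  define c where "c = A $$ (1,2)"
  define d where "d = A $$ (2,0)"
  define e where "e = A $$ (2,1)"
  define f where "f = A $$ (2,2)"
  note F = aut_forward[OF g h, folded \<epsilon>_def a_def b_def c_def d_def e_def f_def]
  have AR: "A = mat_of_rows_list 3 [[\<epsilon>, 0, 0], [a, b, c], [d, e, f]]" using F by simp
  have "[:-\<epsilon>, 1:] * [:b * f - c * e, -(b + f), 1:] = [:-1, 1:] ^ 2 * [:-\<xi>, 1:]"
    using cp AA AR cp3[of \<epsilon> a b c d e f] by simp
  from cp_coeffs[OF this] have "\<epsilon> = -1 \<and> \<xi> = -1 \<and> b + f = 2 \<and> b * f - c * e = 1"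
    using F x1 by (intro refl_alg) auto
  then have em: "\<epsilon> = -1" and bf: "b + f = 2" and D: "b * f - c * e = 1" by auto
  have s: "f = 2 - b" using bf by (simp add: eq_diff_eq add.commute)
  have rel1: "b * b + c * e = 2 * b - 1" using D s by (simp add: algebra_simps)
  have rel2: "f * f + c * e = 2 * f - 1"
  proof -
    have "f * f + c * e - (2 * f - 1) = b * b + c * e - (2 * b - 1)"
      unfolding s by (simp add: algebra_simps)
    then show ?thesis using rel1 by simp
  qed
  have A0: "A $$ (0,1) = 0" "A $$ (0,2) = 0" using AR by (simp_all add: mrl3_idx)
  have pl: "\<phi> (lin3 x y z) = lin3 (x * \<epsilon> + y * a + z * d) (y * b + z * e) (y * c + z * f)" for x y z
    using phi_lin3[OF g h, of x y z] A0 by (simp add: \<epsilon>_def a_def b_def c_def d_def e_def f_def)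
  have it1: "\<exists>\<alpha>. (\<phi> ^^ k) (Xv 1) = lin3 \<alpha> (1 + of_nat k * (b - 1)) (of_nat k * c)" for k
  proof (induction k)
    case 0 then show ?case by (intro exI[of _ 0]) (simp add: lin3_X1)
  next
    case (Suc k)
    then obtain \<alpha> where IH: "(\<phi> ^^ k) (Xv 1) = lin3 \<alpha> (1 + of_nat k * (b - 1)) (of_nat k * c)" by blast
    let ?K = "of_nat k :: 'k"
    have y: "(1 + ?K * (b - 1)) * b + ?K * c * e = 1 + (1 + ?K) * (b - 1)"
    proof -
      have "(1 + ?K * (b - 1)) * b + ?K * c * e - (1 + (1 + ?K) * (b - 1)) = ?K * (b * b + c * e - (2 * b - 1))"
        by (simp add: algebra_simps)
      then show ?thesis using rel1 by simp
    qed
    have z: "(1 + ?K * (b - 1)) * c + ?K * c * f = (1 + ?K) * c"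
    proof -
      have "(1 + ?K * (b - 1)) * c + ?K * c * f - (1 + ?K) * c = ?K * c * (b + f - 2)"
        by (simp add: algebra_simps)
      then show ?thesis using s by simp
    qed
    have "(\<phi> ^^ Suc k) (Xv 1) = \<phi> ((\<phi> ^^ k) (Xv 1))" by simp
    also have "\<dots> = lin3 (\<alpha> * \<epsilon> + (1 + ?K * (b - 1)) * a + ?K * c * d)
        ((1 + ?K * (b - 1)) * b + ?K * c * e) ((1 + ?K * (b - 1)) * c + ?K * c * f)"
      by (simp only: IH pl)
    also have "\<dots> = lin3 (\<alpha> * \<epsilon> + (1 + ?K * (b - 1)) * a + ?K * c * d)
        (1 + of_nat (Suc k) * (b - 1)) (of_nat (Suc k) * c)"
      by (simp only: y z of_nat_Suc)
    finally show ?case by blast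
  qed
  have it2: "\<exists>\<beta>. (\<phi> ^^ k) (Xv 2) = lin3 \<beta> (of_nat k * e) (1 + of_nat k * (f - 1))" for k
  proof (induction k)
    case 0 then show ?case by (intro exI[of _ 0]) (simp add: lin3_X2)
  next
    case (Suc k)
    then obtain \<beta> where IH: "(\<phi> ^^ k) (Xv 2) = lin3 \<beta> (of_nat k * e) (1 + of_nat k * (f - 1))" by blast
    let ?K = "of_nat k :: 'k"
    have y: "?K * e * b + (1 + ?K * (f - 1)) * e = (1 + ?K) * e"
    proof -
      have "?K * e * b + (1 + ?K * (f - 1)) * e - (1 + ?K) * e = ?K * e * (b + f - 2)"
        by (simp add: algebra_simps)
      then show ?thesis using s by simp
    qed
    have z: "?K * e * c + (1 + ?K * (f - 1)) * f = 1 + (1 + ?K) * (f - 1)"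
    proof -
      have "?K * e * c + (1 + ?K * (f - 1)) * f - (1 + (1 + ?K) * (f - 1)) = ?K * (f * f + c * e - (2 * f - 1))"
        by (simp add: algebra_simps)
      then show ?thesis using rel2 by simp
    qed
    have "(\<phi> ^^ Suc k) (Xv 2) = \<phi> ((\<phi> ^^ k) (Xv 2))" by simp
    also have "\<dots> = lin3 (\<beta> * \<epsilon> + ?K * e * a + (1 + ?K * (f - 1)) * d)
        (?K * e * b + (1 + ?K * (f - 1)) * e) (?K * e * c + (1 + ?K * (f - 1)) * f)"
      by (simp only: IH pl)
    also have "\<dots> = lin3 (\<beta> * \<epsilon> + ?K * e * a + (1 + ?K * (f - 1)) * d)
        (of_nat (Suc k) * e) (1 + of_nat (Suc k) * (f - 1))"
      by (simp only: y z of_nat_Suc)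
    finally show ?case by blast
  qed
  obtain \<alpha> where a1: "(\<phi> ^^ n) (Xv 1) = lin3 \<alpha> (1 + of_nat n * (b - 1)) (of_nat n * c)" using it1 by blast
  obtain \<beta> where b1: "(\<phi> ^^ n) (Xv 2) = lin3 \<beta> (of_nat n * e) (1 + of_nat n * (f - 1))" using it2 by blast
  have "lin3 \<alpha> (1 + of_nat n * (b - 1)) (of_nat n * c) = lin3 0 1 (0::'k)"
    using a1 nid[OF Pset_Xv[of 1]] by (simp add: lin3_X1)
  then have "1 + of_nat n * (b - 1) = 1" "of_nat n * c = 0" using lin3_inj by blast+
  then have bc: "b = 1" "c = 0" using n0 by simp_all
  have "lin3 \<beta> (of_nat n * e) (1 + of_nat n * (f - 1)) = lin3 0 0 (1::'k)"
    using b1 nid[OF Pset_Xv[of 2]] by (simp add: lin3_X2)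
  then have "of_nat n * e = 0" "1 + of_nat n * (f - 1) = 1" using lin3_inj by blast+
  then have ef: "e = 0" "f = 1" using n0 by simp_all
  show ?thesis using AR em bc ef by (simp add: a_def d_def)
qed

lemma neg_one_ne_one: "(-1 :: 'k::field_char_0) \<noteq> 1"
proof
  assume h: "(-1 :: 'k) = 1"
  have "(2::'k) = 1 + 1" by simp
  also have "\<dots> = 1 + (-1)" using h by simp
  also have "\<dots> = 0" by simp
  finally show False by simp
qed

lemma refl_backward:
  fixes a d :: "'k::field_char_0"
  shows "\<exists>\<phi>. poisson_reflection \<phi> \<and> has_matrix \<phi> (mat_of_rows_list 3 [[-1, 0, 0], [a, 1, 0], [d, 0, 1]])"
proof -
  define A where "A = (mat_of_rows_list 3 [[-1, 0, 0], [a, 1, 0], [d, 0, 1]] :: 'k mat)"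
  let ?M = "\<lambda>i k. A $$ (i, k)"
  have ma: "graded_poisson_aut (subst ?M) \<and> has_matrix (subst ?M) A"
    using matrix_aut[where \<epsilon> = "-1" and a = a and b = 1 and c = 0 and d = d and e = 0 and f = 1]
    unfolding A_def by simp
  have c0: "subst ?M (rowlin ?M 0) = Xv 0"
    by (simp add: rowlin_def subst_lin3 A_def mrl3_idx lin3_X0)
  have c1: "subst ?M (rowlin ?M 1) = Xv 1"
    by (simp add: rowlin_def subst_lin3 A_def mrl3_idx, rule lin3_X1) simp_all
  have c2: "subst ?M (rowlin ?M 2) = Xv 2"
    by (simp add: rowlin_def subst_lin3 A_def mrl3_idx, rule lin3_X2) simp_all
  have inv: "subst ?M (rowlin ?M i) = Xv i" if "i < 3" for i
    by (rule three_cases[OF that]) (simp_all add: c0 c1 c2)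
  have ord: "\<forall>p\<in>Pset. (subst ?M ^^ Suc (Suc 0)) p = p"
    using subst_subst_id[OF inv] by simp
  have prim: "primitive_root 2 (-1 :: 'k)"
    unfolding primitive_root_def
  proof (intro conjI allI impI)
    fix k :: nat assume "0 < k \<and> k < 2"
    then have "k = 1" by simp
    then show "(-1 :: 'k) ^ k \<noteq> 1" using neg_one_ne_one by simp
  qed simp_all
  have cp: "char_poly A = [:-1, 1:] ^ 2 * [:-(-1), 1 :: 'k:]"
    unfolding A_def by (simp add: cp3 power2_eq_square algebra_simps)
  have "poisson_reflection (subst ?M)"
    unfolding poisson_reflection_def
    using ma ord prim cp neg_one_ne_one
    by (intro conjI exI[of _ "Suc (Suc 0)"] exI[of _ A] exI[of _ 2] exI[of _ "-1"]) auto
  then show ?thesis using ma unfolding A_def by blast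
qed

theorem lemma3p1p1:
  fixes dummy :: "'k::field_char_0"
  assumes alg_closed: "\<And>p :: 'k poly. degree p > 0 \<Longrightarrow> \<exists>x. poly p x = 0"
  shows "{A :: 'k mat. \<exists>\<phi>. graded_poisson_aut \<phi> \<and> has_matrix \<phi> A} =
           {mat_of_rows_list 3 [[\<epsilon>, 0, 0], [a, b, c], [d, e, f]] | \<epsilon> a b c d e f.
              b * f \<noteq> c * e \<and> \<epsilon> ^ 2 = b * f - c * e}
     \<and> {A :: 'k mat. \<exists>\<phi>. poisson_reflection \<phi> \<and> has_matrix \<phi> A} =
           {mat_of_rows_list 3 [[-1, 0, 0], [a, 1, 0], [d, 0, 1]] | a d. True}"
proof -
  have s1: "\<exists>\<epsilon> a b c d e f. A = mat_of_rows_list 3 [[\<epsilon>, 0, 0], [a, b, c], [d, e, f]] \<and>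
              b * f \<noteq> c * e \<and> \<epsilon> ^ 2 = b * f - c * e"
    if "graded_poisson_aut \<phi>" "has_matrix \<phi> A" for A :: "'k mat" and \<phi>
    using aut_forward[OF that] by blast
  have s2: "\<exists>\<phi>. graded_poisson_aut \<phi> \<and> has_matrix \<phi> (mat_of_rows_list 3 [[\<epsilon>, 0, 0], [a, b, c], [d, e, f]])"
    if "b * f \<noteq> c * e" "\<epsilon> ^ 2 = b * f - c * e" for \<epsilon> a b c d e f :: 'k
    using matrix_aut[OF that, of a d] by blast
  have s3: "\<exists>a d. A = mat_of_rows_list 3 [[-1, 0, 0], [a, 1, 0], [d, 0, 1]]"
    if "poisson_reflection \<phi>" "has_matrix \<phi> A" for A :: "'k mat" and \<phi>
    using refl_forward[OF that] by blast
  have s4: "\<exists>\<phi>. poisson_reflection \<phi> \<and> has_matrix \<phi> (mat_of_rows_list 3 [[-1, 0, 0], [a, 1, 0], [d, 0, 1]])"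
    for a d :: 'k
    by (rule refl_backward)
  show ?thesis
  proof (intro conjI)
    show "{A :: 'k mat. \<exists>\<phi>. graded_poisson_aut \<phi> \<and> has_matrix \<phi> A} =
           {mat_of_rows_list 3 [[\<epsilon>, 0, 0], [a, b, c], [d, e, f]] | \<epsilon> a b c d e f.
              b * f \<noteq> c * e \<and> \<epsilon> ^ 2 = b * f - c * e}"
    proof (rule Set.set_eqI)
      fix A :: "'k mat"
      show "A \<in> {A :: 'k mat. \<exists>\<phi>. graded_poisson_aut \<phi> \<and> has_matrix \<phi> A} \<longleftrightarrow>
           A \<in> {mat_of_rows_list 3 [[\<epsilon>, 0, 0], [a, b, c], [d, e, f]] | \<epsilon> a b c d e f.
              b * f \<noteq> c * e \<and> \<epsilon> ^ 2 = b * f - c * e}"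
        unfolding mem_Collect_eq using s1 s2 by blast
    qed
    show "{A :: 'k mat. \<exists>\<phi>. poisson_reflection \<phi> \<and> has_matrix \<phi> A} =
           {mat_of_rows_list 3 [[-1, 0, 0], [a, 1, 0], [d, 0, 1]] | a d. True}"
    proof (rule Set.set_eqI)
      fix A :: "'k mat"
      show "A \<in> {A :: 'k mat. \<exists>\<phi>. poisson_reflection \<phi> \<and> has_matrix \<phi> A} \<longleftrightarrow>
           A \<in> {mat_of_rows_list 3 [[-1, 0, 0], [a, 1, 0], [d, 0, 1]] | a d. True}"
        unfolding mem_Collect_eq using s3 s4 by blast
    qed
  qed
qed

end
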